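(* Let $\mathbb{K}$ be a field and let $\mathcal F=\{f_n(q)\}_{n=1}^\infty$ be a sequence of polynomials in $\mathbb{K}[q]$ satisfying $f_{mn}(q)=f_m(q)f_n(q^m)$ for all $m,n\in\mathbb N$. Suppose $\mathrm{supp}(\mathcal F)=S(P)$ for some nonempty finite set $P$ of prime numbers, and $f_p(0)=1$ for all $p\in P$. Then there exists a formal power series $F(q)\in\mathbb{K}[[q]]$ such that \[ F(q)=\lim_{\substack{n\to\infty\\ n\in S(P)}}f_n(q), \] i.e. for every $N$ there is $n_0$ such that $f_n(q)\equiv F(q)\pmod{q^N}$ for all $n\in S(P)$ with $n\ge n_0$.
   Context: $\mathbb N=\{1,2,3,\dots\}$. $\mathrm{supp}(\mathcal F)=\{n\in\mathbb N: f_n(q)\ne0\}$. For a set $P$ of primes, $S(P)$ is the multiplicative semigroup of positive integers generated by $P$ (all finite products of elements of $P$, including the empty product $1$). For power series $g,h$, $g\equiv h\pmod{q^N}$ means their coefficients of $q^0,\dots,q^{N-1}$ agree. *)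

theory Defs
  imports "HOL-Computational_Algebra.Computational_Algebra"
begin

inductive_set S_gen :: "nat set \<Rightarrow> nat set" for P :: "nat set" where
  one: "1 \<in> S_gen P"
| mult: "p \<in> P \<Longrightarrow> n \<in> S_gen P \<Longrightarrow> p * n \<in> S_gen P"

definition supp :: "(nat \<Rightarrow> 'a::zero poly) \<Rightarrow> nat set" where
  "supp f = {n. n \<ge> 1 \<and> f n \<noteq> 0}"

end

theory Submission
  imports Defs
begin

lemma coeff_pcomp_monom_low:
  fixes g h :: "'a::field poly"
  assumes "poly g 0 = 1" "k < n"
  shows "coeff (h * pcompose g (monom 1 n)) k = coeff h k"
proof -
  obtain a g' where g: "g = pCons a g'" by (cases g) auto
  have a: "a = 1" using assms(1) g by simp
  have "pcompose g (monom 1 n) = 1 + monom 1 n * pcompose g' (monom 1 n)"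
    using g a by (simp add: pcompose_pCons one_pCons)
  hence "h * pcompose g (monom 1 n) = h + monom 1 n * (h * pcompose g' (monom 1 n))"
    by (simp add: algebra_simps)
  thus ?thesis using assms(2) by (simp add: coeff_monom_mult)
qed

theorem mainTheorem4:
  fixes f :: "nat \<Rightarrow> 'a::field poly" and P :: "nat set"
  assumes mult: "\<And>m n. m \<ge> 1 \<Longrightarrow> n \<ge> 1 \<Longrightarrow>
                   f (m * n) = f m * pcompose (f n) (monom 1 m)"
    and P_primes: "\<forall>p\<in>P. prime p"
    and P_fin: "finite P" and P_ne: "P \<noteq> {}"
    and supp_eq: "supp f = S_gen P"
    and f_p0: "\<forall>p\<in>P. poly (f p) 0 = 1"
  shows "\<exists>F :: 'a fps. \<forall>N. \<exists>n0. \<forall>n\<in>S_gen P. n \<ge> n0 \<longrightarrow>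
            (\<forall>k<N. coeff (f n) k = fps_nth F k)"
proof -
  have ge1: "n \<ge> 1" if "n \<in> S_gen P" for n
    using that supp_eq unfolding supp_def by blast
  have nz: "f n \<noteq> 0" if "n \<in> S_gen P" for n
    using that supp_eq unfolding supp_def by blast
  have m1: "monom (1::'a) 1 = [:0,1:]" by (simp add: monom_Suc)
  have "f 1 = f 1 * f 1" using mult[of 1 1] unfolding m1 pcompose_idR by simp
  hence f1: "f 1 = 1" using nz[OF S_gen.one]
    by (metis mult.right_neutral mult_left_cancel)
  have closed: "n * m \<in> S_gen P" if "n \<in> S_gen P" "m \<in> S_gen P" for n m
    using that by (induction n rule: S_gen.induct) (auto simp: mult.assoc intro: S_gen.mult)
  have p0: "poly (f n) 0 = 1" if "n \<in> S_gen P" for n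
    using that
  proof (induction n rule: S_gen.induct)
    case one then show ?case using f1 by (metis poly_1)
  next
    case (mult p n)
    have "p \<ge> 1" using mult.hyps P_primes prime_ge_1_nat by blast
    moreover have "n \<ge> 1" using ge1 mult.hyps by blast
    ultimately show ?case using mult f_p0 by (simp add: assms(1) poly_pcompose poly_monom power_0_left)
  qed
  have low: "coeff (f (n*m)) j = coeff (f n) j" if "n \<in> S_gen P" "m \<in> S_gen P" "j < n" for n m j
    using mult[OF ge1[OF that(1)] ge1[OF that(2)]] coeff_pcomp_monom_low[OF p0[OF that(2)] that(3)]
    by simp
  have agree: "coeff (f n) j = coeff (f m) j"
    if "n \<in> S_gen P" "m \<in> S_gen P" "j < n" "j < m" for n m j
    using low[OF that(1,2,3)] low[OF that(2,1,4)] by (simp add: mult.commute)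
  obtain p where p: "p \<in> P" using P_ne by blast
  have p2: "p \<ge> 2" using p P_primes prime_ge_2_nat by blast
  have pw: "p ^ i \<in> S_gen P" for i
    by (induction i) (auto intro: S_gen.mult p S_gen.one[simplified])
  have big: "k < p ^ (k+1)" for k
  proof -
    have "k < 2 ^ k" by (rule less_exp)
    also have "\<dots> \<le> p ^ k" using p2 by (simp add: power_mono)
    also have "\<dots> \<le> p ^ (k+1)" using p2 by simp
    finally show ?thesis .
  qed
  define F where "F = Abs_fps (\<lambda>k. coeff (f (p ^ (k+1))) k)"
  have "\<forall>n\<in>S_gen P. n \<ge> N \<longrightarrow> (\<forall>k<N. coeff (f n) k = fps_nth F k)" for N
  proof (intro ballI impI allI)
    fix n k assume n: "n \<in> S_gen P" "N \<le> n" "k < N"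
    have "coeff (f n) k = coeff (f (p ^ (k+1))) k"
      by (rule agree[OF n(1) pw]) (use n big in auto)
    thus "coeff (f n) k = fps_nth F k" unfolding F_def by simp
  qed
  thus ?thesis by blast
qed

end
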